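(* Let $\mathbf d$ be a graphical degree sequence and let $k$ be an integer with $\underline{\mu}(\mathbf d)\le k\le\overline{\mu}(\mathbf d)$. Then there is a graph $G$ realizing $\mathbf d$ with $\mu(G)=k$.
   Context: All graphs are finite and simple. For a graph $G=(V,E)$ on $n$ vertices, a fractional vertex cover is a function $f:V\to[0,\infty)$ with $f(u)+f(v)\ge 1$ for every edge $uv\in E$; $\tau^*(G)$ denotes the minimum of $\sum_{v\in V}f(v)$ over all fractional vertex covers. For $E'\subseteq E$ let $G-E'=(V,E\setminus E')$. Define $\mu(G)=\min\{|E'| : E'\subseteq E,\ \tau^*(G-E')<n/2\}$. A sequence $(d_1,\dots,d_n)$ is graphical if some simple graph on $\{v_1,\dots,v_n\}$ has $d(v_i)=d_i$ for all $i$ (such a graph realizes it). $\underline{\mu}(\mathbf d)$ and $\overline{\mu}(\mathbf d)$ are the minimum and maximum of $\mu(G)$ over all graphs $G$ realizing $\mathbf d$. *)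

theory Defs
  imports Complex_Main
begin

text \<open>A simple graph on the vertex set {0..<n} (vertex i stands for v_(i+1)),
  given by its set of edges, each a 2-element subset of the vertex set.\<close>
definition simple_graph :: "nat \<Rightarrow> nat set set \<Rightarrow> bool" where
  "simple_graph n E \<longleftrightarrow> (\<forall>e\<in>E. e \<subseteq> {0..<n} \<and> card e = 2)"

definition degree :: "nat set set \<Rightarrow> nat \<Rightarrow> nat" where
  "degree E v = card {e\<in>E. v \<in> e}"

definition realizes :: "nat list \<Rightarrow> nat set set \<Rightarrow> bool" where
  "realizes d E \<longleftrightarrow> simple_graph (length d) E \<and> (\<forall>i<length d. degree E i = d ! i)"

definition graphical :: "nat list \<Rightarrow> bool" where
  "graphical d \<longleftrightarrow> (\<exists>E. realizes d E)"

definition frac_vertex_cover :: "nat \<Rightarrow> nat set set \<Rightarrow> (nat \<Rightarrow> real) \<Rightarrow> bool" where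
  "frac_vertex_cover n E f \<longleftrightarrow>
     (\<forall>v<n. f v \<ge> 0) \<and> (\<forall>u v. {u, v} \<in> E \<longrightarrow> f u + f v \<ge> 1)"

text \<open>Minimum total weight of a fractional vertex cover (the minimum is attained,
  so it coincides with the infimum).\<close>
definition tau_star :: "nat \<Rightarrow> nat set set \<Rightarrow> real" where
  "tau_star n E = Inf {(\<Sum>v<n. f v) | f. frac_vertex_cover n E f}"

definition mu :: "nat \<Rightarrow> nat set set \<Rightarrow> nat" where
  "mu n E = (LEAST m. \<exists>E'. E' \<subseteq> E \<and> card E' = m \<and> tau_star n (E - E') < real n / 2)"

definition mu_lower :: "nat list \<Rightarrow> nat" where
  "mu_lower d = Min {mu (length d) E | E. realizes d E}"

definition mu_upper :: "nat list \<Rightarrow> nat" where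
  "mu_upper d = Max {mu (length d) E | E. realizes d E}"

end

theory Submission
  imports Defs
begin

definition badp :: "nat set \<Rightarrow> nat set \<Rightarrow> nat set \<Rightarrow> bool" where
  "badp S T e \<longleftrightarrow> (\<exists>x y. e = {x,y} \<and> x \<in> S \<and> y \<notin> T)"

definition bad :: "nat set \<Rightarrow> nat set \<Rightarrow> nat set set \<Rightarrow> nat set set" where
  "bad S T E = {e\<in>E. badp S T e}"

lemma badp_pair: "badp S T {x,y} \<longleftrightarrow> (x\<in>S \<and> y\<notin>T) \<or> (y\<in>S \<and> x\<notin>T)"
  unfolding badp_def by (auto simp: doubleton_eq_iff insert_commute)

lemma L1:
  assumes S: "S \<subseteq> {0..<n}" and T: "T \<subseteq> {0..<n}" and disj: "S \<inter> T = {}"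
    and c: "card T < card S"
  shows "tau_star n (E - bad S T E) < real n / 2"
proof -
  define f where "f = (\<lambda>v. 1/2 - (if v\<in>S then 1/2 else 0) + (if v\<in>T then 1/2 else (0::real)))"
  have cov: "frac_vertex_cover n (E - bad S T E) f"
    unfolding frac_vertex_cover_def
  proof (intro conjI allI impI)
    fix v :: nat assume "v < n" show "f v \<ge> 0" using disj unfolding f_def by auto
  next
    fix u v assume uv: "{u,v} \<in> E - bad S T E"
    hence nb: "\<not> badp S T {u,v}" unfolding bad_def by auto
    show "f u + f v \<ge> 1" using nb disj unfolding badp_pair f_def by (auto split: if_splits)
  qed
  have fin: "finite S" "finite T" using S T finite_subset by auto
  have s1: "(\<Sum>v<n. (if v\<in>S then 1/2 else (0::real))) = real (card S) / 2"
  proof -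
    have "(\<Sum>v<n. (if v\<in>S then 1/2 else (0::real))) = sum (\<lambda>_. 1/2) ({..<n} \<inter> S)"
      by (subst sum.inter_restrict) auto
    moreover have "{..<n} \<inter> S = S" using S by auto
    ultimately show ?thesis by simp
  qed
  have s2: "(\<Sum>v<n. (if v\<in>T then 1/2 else (0::real))) = real (card T) / 2"
  proof -
    have "(\<Sum>v<n. (if v\<in>T then 1/2 else (0::real))) = sum (\<lambda>_. 1/2) ({..<n} \<inter> T)"
      by (subst sum.inter_restrict) auto
    moreover have "{..<n} \<inter> T = T" using T by auto
    ultimately show ?thesis by simp
  qed
  have sumf: "(\<Sum>v<n. f v) = real n / 2 - real (card S)/2 + real (card T)/2"
    unfolding f_def using s1 s2 by (simp add: sum.distrib sum_subtractf)
  have "tau_star n (E - bad S T E) \<le> (\<Sum>v<n. f v)"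
    unfolding tau_star_def
  proof (rule cInf_lower)
    show "(\<Sum>v<n. f v) \<in> {\<Sum>v<n. f v |f. frac_vertex_cover n (E - bad S T E) f}" using cov by blast
    show "bdd_below {\<Sum>v<n. f v |f. frac_vertex_cover n (E - bad S T E) f}"
      by (rule bdd_belowI[of _ 0]) (auto simp: frac_vertex_cover_def intro!: sum_nonneg)
  qed
  also have "\<dots> < real n / 2" using sumf c by simp
  finally show ?thesis .
qed

lemma major:
  fixes x :: "nat \<Rightarrow> real"
  assumes "finite L" "finite U" "\<forall>u\<in>U. x u \<ge> 0"
    "\<forall>t>0. card {v\<in>L. t \<le> x v} \<le> card {v\<in>U. t \<le> x v}"
  shows "sum x L \<le> sum x U"
  using assms
proof (induction "card L" arbitrary: L U rule: less_induct)
  case less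
  show ?case
  proof (cases "L = {}")
    case True thus ?thesis using less.prems by (simp add: sum_nonneg)
  next
    case False
    define m where "m = Max (x ` L)"
    have mL: "m \<in> x ` L" using False less.prems(1) unfolding m_def by simp
    then obtain v where v: "v \<in> L" "x v = m" by auto
    have le_m: "\<forall>w\<in>L. x w \<le> m" using less.prems(1) unfolding m_def by simp
    show ?thesis
    proof (cases "m \<le> 0")
      case True
      have "sum x L \<le> 0" using le_m True by (meson sum_nonpos order.trans)
      also have "0 \<le> sum x U" using less.prems by (simp add: sum_nonneg)
      finally show ?thesis .
    next
      case False
      hence mpos: "m > 0" by simp
      have c1: "card {w\<in>L. m \<le> x w} \<le> card {w\<in>U. m \<le> x w}" using less.prems(4) mpos by blast
      have "v \<in> {w\<in>L. m \<le> x w}" using v by simp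
      moreover have "finite {w\<in>L. m \<le> x w}" using less.prems(1) by simp
      ultimately have "card {w\<in>L. m \<le> x w} > 0" by (metis card_gt_0_iff empty_iff)
      with c1 have "card {w\<in>U. m \<le> x w} > 0" by linarith
      hence "{w\<in>U. m \<le> x w} \<noteq> {}" by (metis card_gt_0_iff)
      then obtain u where u: "u \<in> U" "m \<le> x u" by auto
      have IH: "sum x (L - {v}) \<le> sum x (U - {u})"
      proof (rule less.hyps)
        show "card (L - {v}) < card L" using v less.prems(1) by (meson card_Diff1_less)
        show "finite (L - {v})" "finite (U - {u})" using less.prems by auto
        show "\<forall>u\<in>U - {u}. 0 \<le> x u" using less.prems by auto
        show "\<forall>t>0. card {w \<in> L - {v}. t \<le> x w} \<le> card {w \<in> U - {u}. t \<le> x w}"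
        proof (intro allI impI)
          fix t :: real assume t: "t > 0"
          show "card {w \<in> L - {v}. t \<le> x w} \<le> card {w \<in> U - {u}. t \<le> x w}"
          proof (cases "t \<le> m")
            case True
            have e1: "{w \<in> L - {v}. t \<le> x w} = {w\<in>L. t \<le> x w} - {v}" by auto
            have e2: "{w \<in> U - {u}. t \<le> x w} = {w\<in>U. t \<le> x w} - {u}" by auto
            have "card ({w\<in>L. t \<le> x w} - {v}) = card {w\<in>L. t \<le> x w} - 1"
              using v True less.prems(1) by (simp add: card_Diff_singleton)
            moreover have "card ({w\<in>U. t \<le> x w} - {u}) = card {w\<in>U. t \<le> x w} - 1"
              using u True less.prems(2) by (simp add: card_Diff_singleton)
            moreover have "card {w\<in>L. t \<le> x w} \<le> card {w\<in>U. t \<le> x w}" using less.prems(4) t by blast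
            ultimately show ?thesis unfolding e1 e2 by linarith
          next
            case False
            then have "{w \<in> L - {v}. t \<le> x w} = {}" using le_m by force
            thus ?thesis by (metis card.empty le0)
          qed
        qed
      qed
      have "sum x L = x v + sum x (L - {v})" using v less.prems(1) by (simp add: sum.remove)
      moreover have "sum x U = x u + sum x (U - {u})" using u less.prems(2) by (simp add: sum.remove)
      ultimately show ?thesis using IH v u by linarith
    qed
  qed
qed

lemma L2:
  assumes sg: "simple_graph n E" and lt: "tau_star n (E - E0) < real n / 2"
  shows "\<exists>S T. S \<subseteq> {0..<n} \<and> T \<subseteq> {0..<n} \<and> S \<inter> T = {} \<and> card T < card S \<and> bad S T E \<subseteq> E0"
proof -
  let ?A = "{\<Sum>v<n. f v |f. frac_vertex_cover n (E - E0) f}"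
  have "frac_vertex_cover n (E - E0) (\<lambda>_. 1::real)" by (simp add: frac_vertex_cover_def)
  hence "(\<Sum>v<n. (\<lambda>_. 1::real) v) \<in> ?A" by blast
  hence "?A \<noteq> {}" by blast
  from cInf_lessD[OF this] lt obtain a where "a \<in> ?A" "a < real n / 2"
    unfolding tau_star_def by blast
  then obtain f where cov: "frac_vertex_cover n (E - E0) f" and fs: "(\<Sum>v<n. f v) < real n / 2"
    by blast
  have f0: "\<And>v. v < n \<Longrightarrow> f v \<ge> 0" and fe: "\<And>u v. {u,v} \<in> E - E0 \<Longrightarrow> f u + f v \<ge> 1"
    using cov unfolding frac_vertex_cover_def by auto
  define g where "g = (\<lambda>v. min (f v) 1)"
  define L where "L = {v\<in>{0..<n}. g v < 1/2}"
  define U where "U = {v\<in>{0..<n}. g v > 1/2}"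
  define x where "x = (\<lambda>v. \<bar>g v - 1/2\<bar>)"
  have finL: "finite L" and finU: "finite U" unfolding L_def U_def by auto
  have LU: "L \<inter> U = {}" unfolding L_def U_def by auto
  have "(\<Sum>v<n. g v) \<le> (\<Sum>v<n. f v)" unfolding g_def by (rule sum_mono) simp
  with fs have gs: "(\<Sum>v<n. g v) < real n / 2" by linarith
  have pt: "\<And>v. v < n \<Longrightarrow> 1/2 - g v = (if v \<in> L then x v else 0) - (if v \<in> U then x v else 0)"
    unfolding L_def U_def x_def by auto
  have "(\<Sum>v<n. 1/2 - g v) = (\<Sum>v<n. (if v \<in> L then x v else 0) - (if v \<in> U then x v else 0))"
    by (rule sum.cong) (auto simp: pt)
  also have "\<dots> = (\<Sum>v<n. (if v \<in> L then x v else 0)) - (\<Sum>v<n. (if v \<in> U then x v else 0))"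
    by (simp add: sum_subtractf)
  also have "(\<Sum>v<n. (if v \<in> L then x v else 0)) = sum x L"
  proof -
    have "(\<Sum>v<n. (if v \<in> L then x v else 0)) = sum x ({..<n} \<inter> L)" by (subst sum.inter_restrict) auto
    moreover have "{..<n} \<inter> L = L" unfolding L_def by auto
    ultimately show ?thesis by simp
  qed
  also have "(\<Sum>v<n. (if v \<in> U then x v else 0)) = sum x U"
  proof -
    have "(\<Sum>v<n. (if v \<in> U then x v else 0)) = sum x ({..<n} \<inter> U)" by (subst sum.inter_restrict) auto
    moreover have "{..<n} \<inter> U = U" unfolding U_def by auto
    ultimately show ?thesis by simp
  qed
  finally have "(\<Sum>v<n. 1/2 - g v) = sum x L - sum x U" .
  moreover have "(\<Sum>v<n. 1/2 - g v) = real n / 2 - (\<Sum>v<n. g v)"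
    by (simp add: sum_subtractf)
  ultimately have "sum x U < sum x L" using gs by linarith
  hence "\<not> (\<forall>t>0. card {v\<in>L. t \<le> x v} \<le> card {v\<in>U. t \<le> x v})"
    using major[OF finL finU, of x] unfolding x_def by force
  then obtain t where t: "t > 0" and ct: "card {v\<in>U. t \<le> x v} < card {v\<in>L. t \<le> x v}"
    by force
  define S where "S = {v\<in>L. t \<le> x v}"
  define T where "T = {v\<in>U. t \<le> x v}"
  have "bad S T E \<subseteq> E0"
  proof
    fix e assume e: "e \<in> bad S T E"
    then obtain p q where epq: "e = {p,q}" and pS: "p \<in> S" and qT: "q \<notin> T" and eE: "e \<in> E"
      unfolding bad_def badp_def by blast
    show "e \<in> E0"
    proof (rule ccontr)
      assume "e \<notin> E0"
      hence "f p + f q \<ge> 1" using fe eE epq by blast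
      moreover have pn: "p < n" "q < n" using sg eE epq unfolding simple_graph_def by auto
      moreover have "g p < 1/2" "t \<le> 1/2 - g p" using pS unfolding S_def L_def x_def by auto
      ultimately have "g q \<ge> 1/2 + t" "g q > 1/2" using f0[of p] f0[of q] t unfolding g_def by auto
      hence "q \<in> T" using pn unfolding T_def U_def x_def by auto
      with qT show False by simp
    qed
  qed
  moreover have "S \<subseteq> {0..<n}" "T \<subseteq> {0..<n}" "S \<inter> T = {}" unfolding S_def T_def L_def U_def by auto
  ultimately show ?thesis using ct unfolding S_def T_def by blast
qed

definition sw :: "nat set set \<Rightarrow> nat set set \<Rightarrow> bool" where
  "sw E E' \<longleftrightarrow> (\<exists>a b c d. distinct [a,b,c,d] \<and> {a,b} \<in> E \<and> {c,d} \<in> E \<and> {a,c} \<notin> E \<and> {b,d} \<notin> E \<and>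
      E' = (E - {{a,b},{c,d}}) \<union> {{a,c},{b,d}})"

lemma sw_sym: assumes "sw E E'" shows "sw E' E"
proof -
  obtain a b c d where h: "distinct [a,b,c,d]" "{a,b} \<in> E" "{c,d} \<in> E" "{a,c} \<notin> E" "{b,d} \<notin> E"
    "E' = (E - {{a,b},{c,d}}) \<union> {{a,c},{b,d}}" using assms unfolding sw_def by blast
  have "distinct [a,c,b,d]" using h(1) by auto
  moreover have "{a,c} \<in> E'" "{b,d} \<in> E'" using h(6) by auto
  moreover have "{a,b} \<notin> E'" "{c,d} \<notin> E'" using h(1) h(6) by (auto simp: doubleton_eq_iff)
  moreover have "E = (E' - {{a,c},{b,d}}) \<union> {{a,b},{c,d}}" using h by (auto simp: doubleton_eq_iff)
  ultimately show ?thesis unfolding sw_def by blast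
qed

lemma sw_rtranclp_sym: "sw\<^sup>*\<^sup>* A B \<Longrightarrow> sw\<^sup>*\<^sup>* B A"
proof (induction rule: rtranclp_induct)
  case base then show ?case by simp
next
  case (step Y Z)
  from sw_sym[OF step(2)] step(3) show ?case by (rule converse_rtranclp_into_rtranclp)
qed

lemma filt2: "{e\<in>{A,B}. P e} = (if P A then {A} else {}) \<union> (if P B then {B} else {})"
  by auto

lemma sw_realizes: assumes "sw E E'" "realizes d E" shows "realizes d E'"
proof -
  obtain a b c e where h: "distinct [a,b,c,e]" "{a,b} \<in> E" "{c,e} \<in> E" "{a,c} \<notin> E" "{b,e} \<notin> E"
    "E' = (E - {{a,b},{c,e}}) \<union> {{a,c},{b,e}}" using assms(1) unfolding sw_def by blast
  have sg: "simple_graph (length d) E" and dg: "\<forall>i<length d. degree E i = d ! i"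
    using assms(2) unfolding realizes_def by auto
  have "E \<subseteq> Pow {0..<length d}" using sg unfolding simple_graph_def by auto
  hence fin: "finite E" by (rule finite_subset) simp
  have rng: "a < length d" "b < length d" "c < length d" "e < length d"
    using sg h(2,3) unfolding simple_graph_def by auto
  have sg': "simple_graph (length d) E'"
    unfolding simple_graph_def
  proof
    fix f assume "f \<in> E'"
    hence "f \<in> E \<or> f = {a,c} \<or> f = {b,e}" using h(6) by blast
    thus "f \<subseteq> {0..<length d} \<and> card f = 2"
    proof (elim disjE)
      assume "f \<in> E" thus ?thesis using sg unfolding simple_graph_def by blast
    next
      assume "f = {a,c}" thus ?thesis using rng h(1) by auto
    next
      assume "f = {b,e}" thus ?thesis using rng h(1) by auto
    qed
  qed
  have deg: "degree E' v = degree E v" for v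
  proof -
    define Ev where "Ev = {f\<in>E. v\<in>f}"
    define X where "X = {f\<in>{{a,b},{c,e}}. v\<in>f}"
    define Y where "Y = {f\<in>{{a,c},{b,e}}. v\<in>f}"
    have eq: "{f\<in>E'. v\<in>f} = (Ev - X) \<union> Y" unfolding h(6) Ev_def X_def Y_def by auto
    have XE: "X \<subseteq> Ev" using h(2,3) unfolding X_def Ev_def by auto
    have YE: "(Ev - X) \<inter> Y = {}" using h(4,5) unfolding Y_def Ev_def by auto
    have fEv: "finite Ev" using fin unfolding Ev_def by simp
    have fY: "finite Y" unfolding Y_def by simp
    have d1: "{a,b} \<noteq> {c,e}" "{a,c} \<noteq> {b,e}" using h(1) by (auto simp: doubleton_eq_iff)
    have cXY: "card X = card Y"
      unfolding X_def Y_def filt2 using h(1) d1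
      by (cases "v = a"; cases "v = b"; cases "v = c"; cases "v = e"; simp)
    have "card {f\<in>E'. v\<in>f} = card (Ev - X) + card Y"
      unfolding eq by (rule card_Un_disjoint[OF finite_Diff[OF fEv] fY YE])
    also have "card (Ev - X) = card Ev - card X" by (rule card_Diff_subset[OF finite_subset[OF XE fEv] XE])
    also have "card X \<le> card Ev" by (rule card_mono[OF fEv XE])
    hence "card Ev - card X + card Y = card Ev" using cXY by simp
    finally show ?thesis unfolding degree_def Ev_def .
  qed
  show ?thesis using sg' dg deg unfolding realizes_def by simp
qed

lemma sw_rtranclp_realizes: "sw\<^sup>*\<^sup>* A B \<Longrightarrow> realizes d A \<Longrightarrow> realizes d B"
  by (induction rule: rtranclp_induct) (auto intro: sw_realizes)

lemma bad_sw:
  assumes "sw E E'" "finite E" "S \<inter> T = {}"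
  shows "card (bad S T E') \<le> card (bad S T E) + 1"
proof -
  obtain a b c e where h: "distinct [a,b,c,e]" "{a,b} \<in> E" "{c,e} \<in> E" "{a,c} \<notin> E" "{b,e} \<notin> E"
    "E' = (E - {{a,b},{c,e}}) \<union> {{a,c},{b,e}}" using assms(1) unfolding sw_def by blast
  define P where "P = badp S T"
  define X where "X = {f\<in>{{a,b},{c,e}}. P f}"
  define Y where "Y = {f\<in>{{a,c},{b,e}}. P f}"
  define B where "B = bad S T E"
  have key: "\<not> (P {a,c} \<and> P {b,e} \<and> \<not> P {a,b} \<and> \<not> P {c,e})"
    using assms(3) unfolding badp_pair P_def by blast
  have sub: "bad S T E' \<subseteq> (B - X) \<union> Y" unfolding h(6) bad_def B_def X_def Y_def P_def by auto
  have XB: "X \<subseteq> B" using h(2,3) unfolding bad_def X_def B_def P_def by auto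
  have finB: "finite B" using assms(2) unfolding bad_def B_def by simp
  have fY: "finite Y" unfolding Y_def by simp
  have d1: "{a,b} \<noteq> {c,e}" "{a,c} \<noteq> {b,e}" using h(1) by (auto simp: doubleton_eq_iff)
  have cY: "card Y \<le> card X + 1"
    unfolding X_def Y_def filt2 using key d1
    by (cases "P {a,b}"; cases "P {c,e}"; cases "P {a,c}"; cases "P {b,e}"; simp)
  have "card (bad S T E') \<le> card ((B - X) \<union> Y)"
    by (rule card_mono[OF _ sub]) (use finB fY in simp)
  also have "\<dots> \<le> card (B - X) + card Y" by (rule card_Un_le)
  also have "card (B - X) = card B - card X" by (rule card_Diff_subset[OF finite_subset[OF XB finB] XB])
  also have "card X \<le> card B" by (rule card_mono[OF finB XB])
  hence "card B - card X + card Y \<le> card B + 1" using cY by linarith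
  finally show ?thesis unfolding B_def by simp
qed

lemma sg_sub: "simple_graph n E \<Longrightarrow> e \<in> E \<Longrightarrow> e \<subseteq> {0..<n}"
  unfolding simple_graph_def by blast

lemma sg_card: "simple_graph n E \<Longrightarrow> e \<in> E \<Longrightarrow> card e = 2"
  unfolding simple_graph_def by blast

lemma sg_finite: "simple_graph n E \<Longrightarrow> finite E"
proof -
  assume "simple_graph n E"
  hence "E \<subseteq> Pow {0..<n}" using sg_sub by blast
  thus "finite E" by (rule finite_subset) simp
qed

lemma mu_sw:
  assumes r: "realizes d E" and s: "sw E E'"
  shows "mu (length d) E' \<le> mu (length d) E + 1"
proof -
  let ?n = "length d"
  have sg: "simple_graph ?n E" using r unfolding realizes_def by simp
  have fin: "finite E" by (rule sg_finite[OF sg])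
  obtain a b where "{a,b} \<in> E" using s unfolding sw_def by blast
  from sg_sub[OF sg this] have npos: "?n > 0" by auto
  define P where "P = (\<lambda>F m. \<exists>E'. E' \<subseteq> F \<and> card E' = m \<and> tau_star ?n (F - E') < real ?n / 2)"
  have mu_def': "mu ?n F = (LEAST m. P F m)" for F unfolding mu_def P_def by simp
  have Pbad: "P F (card (bad S T F))"
    if "S \<subseteq> {0..<?n}" "T \<subseteq> {0..<?n}" "S \<inter> T = {}" "card T < card S" for F S T
    unfolding P_def using L1[OF that, of F] by (intro exI[of _ "bad S T F"]) (auto simp: bad_def)
  have "P E (card (bad {0..<?n} {} E))" by (rule Pbad) (use npos in auto)
  hence "P E (mu ?n E)" unfolding mu_def' by (rule LeastI)
  then obtain E0 where E0: "E0 \<subseteq> E" "card E0 = mu ?n E" "tau_star ?n (E - E0) < real ?n/2"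
    unfolding P_def by blast
  obtain S T where ST: "S \<subseteq> {0..<?n}" "T \<subseteq> {0..<?n}" "S \<inter> T = {}" "card T < card S" "bad S T E \<subseteq> E0"
    using L2[OF sg E0(3)] by blast
  have "card (bad S T E) \<le> card E0" by (rule card_mono[OF finite_subset[OF E0(1) fin] ST(5)])
  moreover have "card (bad S T E') \<le> card (bad S T E) + 1" by (rule bad_sw[OF s fin ST(3)])
  moreover have "mu ?n E' \<le> card (bad S T E')" unfolding mu_def' by (rule Least_le) (rule Pbad[OF ST(1-4)])
  ultimately show ?thesis using E0(2) by linarith
qed

lemma ivt:
  assumes "sw\<^sup>*\<^sup>* A B" "realizes d A" "mu (length d) A \<le> k" "k \<le> mu (length d) B"
  shows "\<exists>C. realizes d C \<and> mu (length d) C = k"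
  using assms(1,4)
proof (induction rule: rtranclp_induct)
  case base then show ?case using assms(2,3) by (intro exI[of _ A]) simp
next
  case (step Y Z)
  show ?case
  proof (cases "k \<le> mu (length d) Y")
    case True then show ?thesis using step.IH by blast
  next
    case False
    have rY: "realizes d Y" using sw_rtranclp_realizes[OF step(1) assms(2)] .
    have "mu (length d) Z \<le> mu (length d) Y + 1" by (rule mu_sw[OF rY step(2)])
    hence "mu (length d) Z = k" using False step.prems by linarith
    moreover have "realizes d Z" using sw_realizes[OF step(2) rY] .
    ultimately show ?thesis by blast
  qed
qed

definition nbr :: "nat set set \<Rightarrow> nat \<Rightarrow> nat set" where "nbr E v = {y. {v,y} \<in> E}"

lemma nbr_sub: assumes "simple_graph n E" shows "nbr E v \<subseteq> {0..<n}"
proof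
  fix y assume "y \<in> nbr E v"
  hence "{v,y} \<in> E" unfolding nbr_def by simp
  from sg_sub[OF assms this] show "y \<in> {0..<n}" by blast
qed

lemma nbr_fin: assumes "simple_graph n E" shows "finite (nbr E v)"
  by (rule finite_subset[OF nbr_sub[OF assms]]) simp

lemma no_loop: assumes "simple_graph n E" shows "{u,u} \<notin> E"
proof
  assume "{u,u} \<in> E"
  from sg_card[OF assms this] have "card {u,u} = 2" .
  thus False by simp
qed

lemma deg_nbr: assumes "simple_graph n E" shows "degree E v = card (nbr E v)"
proof -
  have "bij_betw (\<lambda>y. {v,y}) (nbr E v) {e\<in>E. v\<in>e}"
    unfolding bij_betw_def
  proof
    show "inj_on (\<lambda>y. {v,y}) (nbr E v)" by (auto simp: inj_on_def doubleton_eq_iff)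
    show "(\<lambda>y. {v,y}) ` nbr E v = {e\<in>E. v\<in>e}"
    proof
      show "(\<lambda>y. {v,y}) ` nbr E v \<subseteq> {e\<in>E. v\<in>e}" unfolding nbr_def by auto
      show "{e\<in>E. v\<in>e} \<subseteq> (\<lambda>y. {v,y}) ` nbr E v"
      proof
        fix e assume e: "e \<in> {e\<in>E. v\<in>e}"
        then have "card e = 2" using sg_card[OF assms] by blast
        then obtain p q where pq: "e = {p,q}" "p\<noteq>q" by (auto simp: card_2_iff)
        have eE: "e \<in> E" and ve: "v \<in> e" using e by auto
        have "v = p \<or> v = q" using ve pq(1) by blast
        then obtain y where "e = {v,y}" using pq(1) by (metis insert_commute)
        moreover have "y \<in> nbr E v" using eE calculation unfolding nbr_def by simp
        ultimately show "e \<in> (\<lambda>y. {v,y}) ` nbr E v" by blast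
      qed
    qed
  qed
  from bij_betw_same_card[OF this] show ?thesis unfolding degree_def by simp
qed

lemma exists_w:
  assumes sg: "simple_graph n E" and px: "{x,p} \<in> E" and qx: "{x,q} \<notin> E"
    and xW: "x \<notin> W" and pW: "p \<notin> W" and qW: "q \<notin> W" and pq: "p \<noteq> q" and xq: "x \<noteq> q"
    and dg: "card {w. w \<notin> W \<and> {p,w} \<in> E} \<le> card {w. w \<notin> W \<and> {q,w} \<in> E}"
  shows "\<exists>w. w \<notin> W \<and> {q,w} \<in> E \<and> {p,w} \<notin> E \<and> w \<noteq> x \<and> w \<noteq> p \<and> w \<noteq> q"
proof (rule ccontr)
  assume no: "\<not> ?thesis"
  define A0 where "A0 = {w. w \<notin> W \<and> {q,w} \<in> E}"
  define B0 where "B0 = {w. w \<notin> W \<and> {p,w} \<in> E}"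
  have nl: "{u,u} \<notin> E" for u by (rule no_loop[OF sg])
  have finA: "finite A0" using nbr_fin[OF sg, of q] unfolding A0_def nbr_def
    by (rule finite_subset[rotated]) auto
  have finB: "finite B0" using nbr_fin[OF sg, of p] unfolding B0_def nbr_def
    by (rule finite_subset[rotated]) auto
  have sub: "A0 - {p} \<subseteq> B0 - {q} - {x}"
  proof
    fix w assume w: "w \<in> A0 - {p}"
    have wq: "w \<noteq> q" using w nl unfolding A0_def by auto
    moreover have wx: "w \<noteq> x" using w qx unfolding A0_def by (auto simp: insert_commute)
    ultimately have "{p,w} \<in> E" using no w unfolding A0_def by blast
    thus "w \<in> B0 - {q} - {x}" using w wq wx unfolding B0_def A0_def by auto
  qed
  have xB: "x \<in> B0 - {q}" using xW px xq unfolding B0_def by (auto simp: insert_commute)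
  have eqc: "(p \<in> A0) = (q \<in> B0)" unfolding A0_def B0_def using pW qW by (auto simp: insert_commute)
  have c1: "card (A0 - {p}) = (if p \<in> A0 then card A0 - 1 else card A0)" by (rule card_Diff_singleton_if)
  have c2: "card (B0 - {q}) = (if q \<in> B0 then card B0 - 1 else card B0)" by (rule card_Diff_singleton_if)
  have dg': "card B0 \<le> card A0" using dg unfolding A0_def B0_def .
  have "card (A0 - {p}) \<le> card (B0 - {q} - {x})" by (rule card_mono[OF _ sub]) (use finB in simp)
  also have "\<dots> = card (B0 - {q}) - 1" using xB by (simp add: card_Diff_singleton_if)
  finally have "card (A0 - {p}) \<le> card (B0 - {q}) - 1" .
  moreover have "card (B0 - {q}) > 0" using xB finB by (metis card_gt_0_iff empty_iff finite_Diff)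
  moreover have "card (B0 - {q}) \<le> card (A0 - {p})" using c1 c2 eqc dg' by (cases "p \<in> A0") auto
  ultimately show False by linarith
qed

definition agree :: "nat set \<Rightarrow> nat set set \<Rightarrow> nat set set \<Rightarrow> bool" where
  "agree W G H \<longleftrightarrow> (\<forall>e. (e \<in> G) \<noteq> (e \<in> H) \<longrightarrow> e \<inter> W = {})"

lemma dW_eq:
  assumes sgG: "simple_graph n G" and sgH: "simple_graph n H" and ag: "agree W G H"
    and cd: "card (nbr G v) = card (nbr H v)"
  shows "card {w. w \<notin> W \<and> {v,w} \<in> G} = card {w. w \<notin> W \<and> {v,w} \<in> H}"
proof -
  have eqW: "nbr G v \<inter> W = nbr H v \<inter> W"
  proof (rule set_eqI)
    fix w
    show "w \<in> nbr G v \<inter> W \<longleftrightarrow> w \<in> nbr H v \<inter> W"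
    proof (cases "w \<in> W")
      case True
      have "({v,w} \<in> G) = ({v,w} \<in> H)"
      proof (rule ccontr)
        assume "({v,w} \<in> G) \<noteq> ({v,w} \<in> H)"
        hence "{v,w} \<inter> W = {}" using ag unfolding agree_def by blast
        with True show False by blast
      qed
      thus ?thesis unfolding nbr_def by simp
    qed simp
  qed
  have dG: "nbr G v = {w. w \<notin> W \<and> {v,w} \<in> G} \<union> (nbr G v \<inter> W)" unfolding nbr_def by blast
  have dH: "nbr H v = {w. w \<notin> W \<and> {v,w} \<in> H} \<union> (nbr H v \<inter> W)" unfolding nbr_def by blast
  have fG: "finite (nbr G v)" by (rule nbr_fin[OF sgG])
  have fH: "finite (nbr H v)" by (rule nbr_fin[OF sgH])
  have f1: "finite {w. w \<notin> W \<and> {v,w} \<in> G}" by (rule finite_subset[OF _ fG]) (auto simp: nbr_def)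
  have f2: "finite {w. w \<notin> W \<and> {v,w} \<in> H}" by (rule finite_subset[OF _ fH]) (auto simp: nbr_def)
  have "card (nbr G v) = card {w. w \<notin> W \<and> {v,w} \<in> G} + card (nbr G v \<inter> W)"
    by (subst dG, rule card_Un_disjoint) (use f1 fG in auto)
  moreover have "card (nbr H v) = card {w. w \<notin> W \<and> {v,w} \<in> H} + card (nbr H v \<inter> W)"
    by (subst dH, rule card_Un_disjoint) (use f2 fH in auto)
  ultimately show ?thesis using cd eqW by simp
qed

lemma inner:
  assumes "realizes d G" "realizes d H" "agree W G H" "x \<notin> W" "x < length d"
  shows "\<exists>G' H'. sw\<^sup>*\<^sup>* G G' \<and> sw\<^sup>*\<^sup>* H H' \<and> agree (insert x W) G' H'"
  using assms
proof (induction "card (nbr G x - nbr H x)" arbitrary: G H rule: less_induct)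
  case less
  let ?n = "length d"
  have sgG: "simple_graph ?n G" and sgH: "simple_graph ?n H"
    using less.prems(1,2) unfolding realizes_def by auto
  have cdeg: "card (nbr G v) = card (nbr H v)" if "v < ?n" for v
    using less.prems(1,2) that deg_nbr[OF sgG, of v] deg_nbr[OF sgH, of v] unfolding realizes_def by auto
  have fG: "finite (nbr G v)" for v by (rule nbr_fin[OF sgG])
  have fH: "finite (nbr H v)" for v by (rule nbr_fin[OF sgH])
  have nlG: "{u,u} \<notin> G" for u by (rule no_loop[OF sgG])
  have nlH: "{u,u} \<notin> H" for u by (rule no_loop[OF sgH])
  have xW: "x \<notin> W" and xn: "x < ?n" using less.prems by auto
  show ?case
  proof (cases "nbr G x - nbr H x = {}")
    case True
    hence sub: "nbr G x \<subseteq> nbr H x" by blast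
    have eqN: "nbr G x = nbr H x" by (rule card_subset_eq[OF fH sub cdeg[OF xn]])
    have "agree (insert x W) G H"
      unfolding agree_def
    proof (intro allI impI)
      fix e assume e: "(e \<in> G) \<noteq> (e \<in> H)"
      hence eW: "e \<inter> W = {}" using less.prems(3) unfolding agree_def by blast
      have "x \<notin> e"
      proof
        assume xe: "x \<in> e"
        have "e \<in> G \<or> e \<in> H" using e by blast
        hence "card e = 2" using sg_card[OF sgG] sg_card[OF sgH] by blast
        then obtain p q where pq: "e = {p,q}" by (auto simp: card_2_iff)
        then obtain y where "e = {x,y}" using xe by (metis insert_commute insertE singletonD)
        with e eqN show False unfolding nbr_def by (metis mem_Collect_eq)
      qed
      thus "e \<inter> insert x W = {}" using eW by auto
    qed
    thus ?thesis by blast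
  next
    case False
    then obtain y where y: "{x,y} \<in> G" "{x,y} \<notin> H" unfolding nbr_def by auto
    have "\<not> nbr H x \<subseteq> nbr G x"
    proof
      assume "nbr H x \<subseteq> nbr G x"
      hence "nbr H x = nbr G x" by (rule card_subset_eq[OF fG _ cdeg[OF xn, symmetric]])
      with False show False by blast
    qed
    then obtain z where z: "{x,z} \<in> H" "{x,z} \<notin> G" unfolding nbr_def by auto
    have yx: "y \<noteq> x" using y nlG by auto
    have zx: "z \<noteq> x" using z nlH by auto
    have yz: "y \<noteq> z" using y z by auto
    have yW: "y \<notin> W"
    proof -
      have "{x,y} \<inter> W = {}" using less.prems(3) y unfolding agree_def by blast
      thus ?thesis by blast
    qed
    have zW: "z \<notin> W"
    proof -
      have "{x,z} \<inter> W = {}" using less.prems(3) z unfolding agree_def by blast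
      thus ?thesis by blast
    qed
    have yn: "y < ?n" using sg_sub[OF sgG y(1)] by auto
    have zn: "z < ?n" using sg_sub[OF sgH z(1)] by auto
    have dW: "card {w. w \<notin> W \<and> {v,w} \<in> G} = card {w. w \<notin> W \<and> {v,w} \<in> H}" if "v < ?n" for v
      by (rule dW_eq[OF sgG sgH less.prems(3) cdeg[OF that]])
    have yD: "y \<in> nbr G x - nbr H x" using y unfolding nbr_def by simp
    have fD: "finite (nbr G x - nbr H x)" using fG by simp
    have dec: "card ((nbr G x - nbr H x) - {y}) < card (nbr G x - nbr H x)"
      by (rule card_Diff1_less[OF fD yD])
    show ?thesis
    proof (cases "card {w. w \<notin> W \<and> {y,w} \<in> G} \<le> card {w. w \<notin> W \<and> {z,w} \<in> G}")
      case True
      obtain w where w: "w \<notin> W" "{z,w} \<in> G" "{y,w} \<notin> G" "w \<noteq> x" "w \<noteq> y" "w \<noteq> z"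
        using exists_w[OF sgG y(1) z(2) xW yW zW yz zx[symmetric] True] by blast
      define G' where "G' = (G - {{x,y},{z,w}}) \<union> {{x,z},{y,w}}"
      have swG: "sw G G'" unfolding sw_def
        by (rule exI[of _ x], rule exI[of _ y], rule exI[of _ z], rule exI[of _ w])
          (use yx zx yz w y z in \<open>auto simp: G'_def\<close>)
      have rG': "realizes d G'" by (rule sw_realizes[OF swG less.prems(1)])
      have agG': "agree W G' H"
        unfolding agree_def
      proof (intro allI impI)
        fix e assume e: "(e \<in> G') \<noteq> (e \<in> H)"
        show "e \<inter> W = {}"
        proof (cases "e \<in> {{x,y},{z,w},{x,z},{y,w}}")
          case True thus ?thesis using xW yW zW w(1) by auto
        next
          case False
          hence "(e \<in> G') = (e \<in> G)" unfolding G'_def by auto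
          thus ?thesis using e less.prems(3) unfolding agree_def by auto
        qed
      qed
      have nG': "nbr G' x = insert z (nbr G x - {y})"
      proof (rule set_eqI)
        fix u
        have a1: "{x,u} \<noteq> {z,w}" and a2: "{x,u} \<noteq> {y,w}" using zx w(4) yx
          by (auto simp: doubleton_eq_iff)
        have a3: "({x,u} = {x,y}) = (u = y)" and a4: "({x,u} = {x,z}) = (u = z)"
          by (auto simp: doubleton_eq_iff)
        show "u \<in> nbr G' x \<longleftrightarrow> u \<in> insert z (nbr G x - {y})"
          unfolding nbr_def G'_def using a1 a2 a3 a4 by auto
      qed
      have "nbr G' x - nbr H x = (nbr G x - nbr H x) - {y}"
        unfolding nG' using z(1) unfolding nbr_def by auto
      hence lt: "card (nbr G' x - nbr H x) < card (nbr G x - nbr H x)" using dec by simp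
      obtain G'' H'' where gh: "sw\<^sup>*\<^sup>* G' G''" "sw\<^sup>*\<^sup>* H H''" "agree (insert x W) G'' H''"
        using less.hyps[OF lt rG' less.prems(2) agG' xW xn] by blast
      have "sw\<^sup>*\<^sup>* G G''" by (rule converse_rtranclp_into_rtranclp[OF swG gh(1)])
      thus ?thesis using gh by blast
    next
      case False
      hence le: "card {w. w \<notin> W \<and> {z,w} \<in> H} \<le> card {w. w \<notin> W \<and> {y,w} \<in> H}"
        using dW[OF yn] dW[OF zn] by linarith
      obtain w where w: "w \<notin> W" "{y,w} \<in> H" "{z,w} \<notin> H" "w \<noteq> x" "w \<noteq> z" "w \<noteq> y"
        using exists_w[OF sgH z(1) y(2) xW zW yW yz[symmetric] yx[symmetric] le] by blast
      define H' where "H' = (H - {{x,z},{y,w}}) \<union> {{x,y},{z,w}}"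
      have swH: "sw H H'" unfolding sw_def
        by (rule exI[of _ x], rule exI[of _ z], rule exI[of _ y], rule exI[of _ w])
          (use yx zx yz w y z in \<open>auto simp: H'_def\<close>)
      have rH': "realizes d H'" by (rule sw_realizes[OF swH less.prems(2)])
      have agH': "agree W G H'"
        unfolding agree_def
      proof (intro allI impI)
        fix e assume e: "(e \<in> G) \<noteq> (e \<in> H')"
        show "e \<inter> W = {}"
        proof (cases "e \<in> {{x,y},{z,w},{x,z},{y,w}}")
          case True thus ?thesis using xW yW zW w(1) by auto
        next
          case False
          hence "(e \<in> H') = (e \<in> H)" unfolding H'_def by auto
          thus ?thesis using e less.prems(3) unfolding agree_def by auto
        qed
      qed
      have nH': "nbr H' x = insert y (nbr H x - {z})"
      proof (rule set_eqI)
        fix u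
        have a1: "{x,u} \<noteq> {z,w}" and a2: "{x,u} \<noteq> {y,w}" using zx w(4) yx
          by (auto simp: doubleton_eq_iff)
        have a3: "({x,u} = {x,y}) = (u = y)" and a4: "({x,u} = {x,z}) = (u = z)"
          by (auto simp: doubleton_eq_iff)
        show "u \<in> nbr H' x \<longleftrightarrow> u \<in> insert y (nbr H x - {z})"
          unfolding nbr_def H'_def using a1 a2 a3 a4 by auto
      qed
      have "nbr G x - nbr H' x = (nbr G x - nbr H x) - {y}"
        unfolding nH' using z(2) unfolding nbr_def by auto
      hence lt: "card (nbr G x - nbr H' x) < card (nbr G x - nbr H x)" using dec by simp
      obtain G'' H'' where gh: "sw\<^sup>*\<^sup>* G G''" "sw\<^sup>*\<^sup>* H' H''" "agree (insert x W) G'' H''"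
        using less.hyps[OF lt less.prems(1) rH' agH' xW xn] by blast
      have "sw\<^sup>*\<^sup>* H H''" by (rule converse_rtranclp_into_rtranclp[OF swH gh(2)])
      thus ?thesis using gh by blast
    qed
  qed
qed

lemma outer:
  assumes "realizes d G" "realizes d H" "agree W G H" "W \<subseteq> {0..<length d}"
  shows "sw\<^sup>*\<^sup>* G H"
  using assms
proof (induction "card ({0..<length d} - W)" arbitrary: G H W rule: less_induct)
  case less
  let ?n = "length d"
  have sgG: "simple_graph ?n G" and sgH: "simple_graph ?n H"
    using less.prems(1,2) unfolding realizes_def by auto
  show ?case
  proof (cases "{0..<?n} \<subseteq> W")
    case True
    have "G = H"
    proof (rule ccontr)
      assume "G \<noteq> H"
      then obtain e where e: "(e \<in> G) \<noteq> (e \<in> H)" by blast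
      hence eW: "e \<inter> W = {}" using less.prems(3) unfolding agree_def by blast
      have "e \<in> G \<or> e \<in> H" using e by blast
      hence "e \<subseteq> {0..<?n}" "card e = 2" using sg_sub[OF sgG] sg_sub[OF sgH] sg_card[OF sgG] sg_card[OF sgH] by blast+
      then obtain p q where "e = {p,q}" by (auto simp: card_2_iff)
      with \<open>e \<subseteq> {0..<?n}\<close> True eW show False by auto
    qed
    thus ?thesis by simp
  next
    case False
    then obtain x where x0: "x \<in> {0..<?n}" "x \<notin> W" by blast
    hence x: "x < ?n" "x \<notin> W" by auto
    obtain G' H' where gh: "sw\<^sup>*\<^sup>* G G'" "sw\<^sup>*\<^sup>* H H'" "agree (insert x W) G' H'"
      using inner[OF less.prems(1,2,3) x(2,1)] by blast
    have rG': "realizes d G'" by (rule sw_rtranclp_realizes[OF gh(1) less.prems(1)])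
    have rH': "realizes d H'" by (rule sw_rtranclp_realizes[OF gh(2) less.prems(2)])
    have eqs: "{0..<?n} - insert x W = ({0..<?n} - W) - {x}" by auto
    have "card ({0..<?n} - insert x W) < card ({0..<?n} - W)"
      unfolding eqs by (rule card_Diff1_less) (use x in auto)
    moreover have "insert x W \<subseteq> {0..<?n}" using x less.prems(4) by auto
    ultimately have "sw\<^sup>*\<^sup>* G' H'" using less.hyps rG' rH' gh(3) by blast
    hence "sw\<^sup>*\<^sup>* G H'" using gh(1) by (rule rtranclp_trans[rotated])
    moreover have "sw\<^sup>*\<^sup>* H' H" by (rule sw_rtranclp_sym[OF gh(2)])
    ultimately show ?thesis by (rule rtranclp_trans)
  qed
qed

lemma conn: "realizes d G \<Longrightarrow> realizes d H \<Longrightarrow> sw\<^sup>*\<^sup>* G H"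
  by (rule outer[where W = "{}"]) (auto simp: agree_def)

theorem theorem13:
  fixes d :: "nat list" and k :: int
  assumes "graphical d"
    and "int (mu_lower d) \<le> k" and "k \<le> int (mu_upper d)"
  shows "\<exists>E. realizes d E \<and> int (mu (length d) E) = k"
proof -
  let ?n = "length d"
  let ?R = "{E. realizes d E}"
  have "?R \<subseteq> Pow (Pow {0..<?n})"
  proof
    fix E assume "E \<in> ?R"
    hence "simple_graph ?n E" unfolding realizes_def by simp
    thus "E \<in> Pow (Pow {0..<?n})" using sg_sub by blast
  qed
  hence finR: "finite ?R" by (rule finite_subset) simp
  have eqset: "{mu ?n E | E. realizes d E} = (\<lambda>E. mu ?n E) ` ?R" by auto
  have fin: "finite {mu ?n E | E. realizes d E}" unfolding eqset using finR by simp
  have ne: "{mu ?n E | E. realizes d E} \<noteq> {}" using assms(1) unfolding graphical_def by auto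
  have "mu_lower d \<in> {mu ?n E | E. realizes d E}" unfolding mu_lower_def by (rule Min_in[OF fin ne])
  then obtain E1 where E1: "realizes d E1" "mu ?n E1 = mu_lower d" by auto
  have "mu_upper d \<in> {mu ?n E | E. realizes d E}" unfolding mu_upper_def by (rule Max_in[OF fin ne])
  then obtain E2 where E2: "realizes d E2" "mu ?n E2 = mu_upper d" by auto
  have c: "sw\<^sup>*\<^sup>* E1 E2" by (rule conn[OF E1(1) E2(1)])
  have k0: "k \<ge> 0" using assms(2) by linarith
  have "mu ?n E1 \<le> nat k" using E1(2) assms(2) by linarith
  moreover have "nat k \<le> mu ?n E2" using E2(2) assms(3) by linarith
  ultimately obtain C where "realizes d C" "mu ?n C = nat k" using ivt[OF c E1(1)] by blast
  thus ?thesis using k0 by (intro exI[of _ C]) simp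
qed

end
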